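(* Let $G=(V,A)$ be a graph with $|e|\ge2$ for all $e\in V$, $\mathfrak n=\mathfrak n(G)$, and $\delta$ a nearly coboundary Lie bialgebra structure on $\mathfrak n$. Write (uniquely) $\delta(v)=\sum_{\alpha\in A}D_\alpha(v)\wedge\alpha+\varphi(v)$ for $v\in W$, with linear maps $D_\alpha:W\to W$ and $\varphi:W\to\Lambda^2\mathfrak z$ (such a form exists since $\delta(W)\subseteq W\wedge\mathfrak z\oplus\Lambda^2\mathfrak z$). Then $D_\alpha D_\beta=D_\beta D_\alpha$ for all $\alpha,\beta\in A$.
   Context: $G=(V,A)$ is a finite simple graph without loops, $V=\{e_1,\dots,e_n\}$ ordered, each edge joining $e_i,e_j$ ($i<j$) oriented from $e_i$ to $e_j$; $|e|$ is the degree. $\mathfrak n(G)$ over a field of characteristic zero has basis $V\cup A$, $[e_i,e_j]=\alpha$ if $\alpha$ goes from $e_i$ to $e_j$, $[e_i,e_j]=0$ if not adjacent, edges central; $\mathfrak z=\mathrm{span}(A)$ (the center), $W=\mathrm{span}(V)$. Lie bialgebra structure: linear $\delta:\mathfrak n\to\Lambda^2\mathfrak n$ with co-Jacobi ($\delta(x_1)\wedge x_2-x_1\wedge\delta(x_2)=0$, Sweedler $\delta(x)=x_1\wedge x_2$) and $\delta[x,y]=[\delta x,y]+[x,\delta y]$. Nearly coboundary means $\delta|_{\mathfrak z}=0$. *)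

theory Defs
  imports Main
begin

text \<open>The graph has vertex set Vs (a finite set of naturals, ordered by the order of nat);
  an edge is a pair (i,j) with i < j, oriented from i to j.  Elements of n(G) are coefficient
  functions supported on the basis; elements of the exterior powers are
  alternating tensors (coefficient functions) supported on the basis.\<close>

datatype bidx = Vx nat | Ed "nat \<times> nat"

definition simple_graph :: "nat set \<Rightarrow> (nat \<times> nat) set \<Rightarrow> bool" where
  "simple_graph Vs E \<longleftrightarrow> finite Vs \<and> (\<forall>(i,j)\<in>E. i \<in> Vs \<and> j \<in> Vs \<and> i < j)"

definition degree :: "(nat \<times> nat) set \<Rightarrow> nat \<Rightarrow> nat" where
  "degree E i = card {j. (i,j) \<in> E \<or> (j,i) \<in> E}"

definition basis :: "nat set \<Rightarrow> (nat \<times> nat) set \<Rightarrow> bidx set" where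
  "basis Vs E = Vx ` Vs \<union> Ed ` E"

definition nG :: "nat set \<Rightarrow> (nat \<times> nat) set \<Rightarrow> (bidx \<Rightarrow> 'k::field) set" where
  "nG Vs E = {x. \<forall>b. b \<notin> basis Vs E \<longrightarrow> x b = 0}"

definition WG :: "nat set \<Rightarrow> (nat \<times> nat) set \<Rightarrow> (bidx \<Rightarrow> 'k::field) set" where
  "WG Vs E = {x \<in> nG Vs E. \<forall>e. x (Ed e) = 0}"

definition ZG :: "nat set \<Rightarrow> (nat \<times> nat) set \<Rightarrow> (bidx \<Rightarrow> 'k::field) set" where
  "ZG Vs E = {x \<in> nG Vs E. \<forall>i. x (Vx i) = 0}"

definition unitv :: "bidx \<Rightarrow> bidx \<Rightarrow> 'k::field" where
  "unitv b = (\<lambda>c. if c = b then 1 else 0)"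

text \<open>Lie bracket: [e_i,e_j] = alpha if alpha goes from e_i to e_j, edges central.\<close>
definition brk :: "(nat \<times> nat) set \<Rightarrow> (bidx \<Rightarrow> 'k::field) \<Rightarrow> (bidx \<Rightarrow> 'k) \<Rightarrow> bidx \<Rightarrow> 'k" where
  "brk E x y = (\<lambda>b. case b of
      Ed (i,j) \<Rightarrow> (if (i,j) \<in> E then x (Vx i) * y (Vx j) - x (Vx j) * y (Vx i) else 0)
    | Vx _ \<Rightarrow> 0)"

text \<open>Lambda^2 n(G): alternating 2-tensors supported on the basis
  (e_a \<and> e_b corresponds to e_a\<otimes>e_b - e_b\<otimes>e_a).\<close>
definition L2 :: "nat set \<Rightarrow> (nat \<times> nat) set \<Rightarrow> (bidx \<Rightarrow> bidx \<Rightarrow> 'k::field) set" where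
  "L2 Vs E = {S. (\<forall>a b. S a b = - S b a) \<and>
                 (\<forall>a b. a \<notin> basis Vs E \<or> b \<notin> basis Vs E \<longrightarrow> S a b = 0)}"

definition L2Z :: "nat set \<Rightarrow> (nat \<times> nat) set \<Rightarrow> (bidx \<Rightarrow> bidx \<Rightarrow> 'k::field) set" where
  "L2Z Vs E = {S \<in> L2 Vs E. \<forall>a b. a \<notin> Ed ` E \<or> b \<notin> Ed ` E \<longrightarrow> S a b = 0}"

definition wedge :: "(bidx \<Rightarrow> 'k::field) \<Rightarrow> (bidx \<Rightarrow> 'k) \<Rightarrow> bidx \<Rightarrow> bidx \<Rightarrow> 'k" where
  "wedge x y = (\<lambda>a b. x a * y b - x b * y a)"

text \<open>Wedge of a 2-vector with a vector, as an alternating 3-tensor.\<close>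
definition wedge3 :: "(bidx \<Rightarrow> bidx \<Rightarrow> 'k::field) \<Rightarrow> (bidx \<Rightarrow> 'k) \<Rightarrow> bidx \<Rightarrow> bidx \<Rightarrow> bidx \<Rightarrow> 'k" where
  "wedge3 S v = (\<lambda>p q r. S p q * v r + S q r * v p + S r p * v q)"

text \<open>Adjoint action of x on Lambda^2: [x, a\<and>b] = [x,a]\<and>b + a\<and>[x,b].\<close>
definition act :: "nat set \<Rightarrow> (nat \<times> nat) set \<Rightarrow> (bidx \<Rightarrow> 'k::field) \<Rightarrow> (bidx \<Rightarrow> bidx \<Rightarrow> 'k)
                    \<Rightarrow> bidx \<Rightarrow> bidx \<Rightarrow> 'k" where
  "act Vs E x S = (\<lambda>p q. \<Sum>c\<in>basis Vs E.
        brk E x (unitv c) p * S c q + brk E x (unitv c) q * S p c)"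

definition lin_vec :: "(bidx \<Rightarrow> 'k::field) set \<Rightarrow> ((bidx \<Rightarrow> 'k) \<Rightarrow> 'c \<Rightarrow> 'k) \<Rightarrow> bool" where
  "lin_vec X f \<longleftrightarrow> (\<forall>x\<in>X. \<forall>y\<in>X. f (\<lambda>b. x b + y b) = (\<lambda>t. f x t + f y t)) \<and>
                     (\<forall>x\<in>X. \<forall>c. f (\<lambda>b. c * x b) = (\<lambda>t. c * f x t))"

text \<open>Co-Jacobi: for delta(x) = x_1 \<and> x_2 (Sweedler), delta(x_1)\<and>x_2 - x_1\<and>delta(x_2) = 0;
  writing delta(x) as an alternating tensor T this is  \<Sum>_{a,b} T(a,b) delta(e_a)\<and>e_b = 0.\<close>
definition lie_bialg :: "nat set \<Rightarrow> (nat \<times> nat) set \<Rightarrow> ((bidx \<Rightarrow> 'k::field) \<Rightarrow> bidx \<Rightarrow> bidx \<Rightarrow> 'k) \<Rightarrow> bool" where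
  "lie_bialg Vs E \<delta> \<longleftrightarrow>
     lin_vec (nG Vs E) (\<lambda>x (a,b). \<delta> x a b) \<and>
     (\<forall>x\<in>nG Vs E. \<delta> x \<in> L2 Vs E) \<and>
     (\<forall>x\<in>nG Vs E. \<forall>p q r.
        (\<Sum>a\<in>basis Vs E. \<Sum>b\<in>basis Vs E. \<delta> x a b * wedge3 (\<delta> (unitv a)) (unitv b) p q r) = 0) \<and>
     (\<forall>x\<in>nG Vs E. \<forall>y\<in>nG Vs E.
        \<delta> (brk E x y) = (\<lambda>p q. act Vs E x (\<delta> y) p q - act Vs E y (\<delta> x) p q))"

definition nearly_coboundary :: "nat set \<Rightarrow> (nat \<times> nat) set \<Rightarrow> ((bidx \<Rightarrow> 'k::field) \<Rightarrow> bidx \<Rightarrow> bidx \<Rightarrow> 'k) \<Rightarrow> bool" where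
  "nearly_coboundary Vs E \<delta> \<longleftrightarrow> (\<forall>z\<in>ZG Vs E. \<delta> z = (\<lambda>a b. 0))"

end

theory Submission
  imports Defs
begin

lemma lin_sum:
  assumes lin: "lin_vec X f" and z: "(\<lambda>b. 0) \<in> X"
    and add: "\<And>x y. x \<in> X \<Longrightarrow> y \<in> X \<Longrightarrow> (\<lambda>b. x b + y b) \<in> X"
    and sm: "\<And>x c. x \<in> X \<Longrightarrow> (\<lambda>b. c * x b) \<in> X"
    and fin: "finite S" and g: "\<forall>j\<in>S. g j \<in> X"
  shows "f (\<lambda>b. \<Sum>j\<in>S. c j * g j b) = (\<lambda>t. \<Sum>j\<in>S. c j * f (g j) t)
         \<and> (\<lambda>b. \<Sum>j\<in>S. c j * g j b) \<in> X"
  using fin g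
proof (induction S rule: finite_induct)
  case empty
  have h: "\<forall>x\<in>X. \<forall>c. f (\<lambda>b. c * x b) = (\<lambda>t. c * f x t)"
    using lin unfolding lin_vec_def by blast
  have "f (\<lambda>b. 0 * (\<lambda>b. 0) b) = (\<lambda>t. 0 * f (\<lambda>b. 0) t)"
    by (rule h[rule_format, OF z])
  then show ?case using z by simp
next
  case (insert a S)
  have ga: "g a \<in> X" using insert by auto
  have IH: "f (\<lambda>b. \<Sum>j\<in>S. c j * g j b) = (\<lambda>t. \<Sum>j\<in>S. c j * f (g j) t)"
     "(\<lambda>b. \<Sum>j\<in>S. c j * g j b) \<in> X" using insert by auto
  have sa: "(\<lambda>b. c a * g a b) \<in> X" using sm ga by blast
  have eq: "(\<lambda>b. \<Sum>j\<in>insert a S. c j * g j b) = (\<lambda>b. (\<lambda>b. c a * g a b) b + (\<lambda>b. \<Sum>j\<in>S. c j * g j b) b)"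
    using insert by simp
  have "f (\<lambda>b. (\<lambda>b. c a * g a b) b + (\<lambda>b. \<Sum>j\<in>S. c j * g j b) b)
      = (\<lambda>t. f (\<lambda>b. c a * g a b) t + f (\<lambda>b. \<Sum>j\<in>S. c j * g j b) t)"
    using conjunct1[OF lin[unfolded lin_vec_def], rule_format, OF sa IH(2)] .
  moreover have "f (\<lambda>b. c a * g a b) = (\<lambda>t. c a * f (g a) t)"
    by (rule conjunct2[OF lin[unfolded lin_vec_def], rule_format, OF ga])
  ultimately show ?case using eq IH insert add[OF sa IH(2)] by simp
qed

lemma wedge3_sum:
  assumes "finite B" "p \<in> B" "q \<in> B" "r \<in> B"
  shows "(\<Sum>b\<in>B. T b * wedge3 S (unitv b) p q r) = T r * S p q + T p * S q r + T q * S r p"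
proof -
  have "\<And>b. T b * wedge3 S (unitv b) p q r = (if b = r then T r * S p q else 0)
     + (if b = p then T p * S q r else 0) + (if b = q then T q * S r p else 0)"
    by (simp add: wedge3_def unitv_def distrib_left)
  then have "(\<Sum>b\<in>B. T b * wedge3 S (unitv b) p q r) = (\<Sum>b\<in>B. (if b = r then T r * S p q else 0)
     + (if b = p then T p * S q r else 0) + (if b = q then T q * S r p else 0))" by simp
  also have "\<dots> = T r * S p q + T p * S q r + T q * S r p"
    using assms by (simp add: sum.distrib)
  finally show ?thesis .
qed



theorem mainTheorem14:
  fixes Vs :: "nat set" and E :: "(nat \<times> nat) set"
    and \<delta> :: "(bidx \<Rightarrow> 'k::field_char_0) \<Rightarrow> bidx \<Rightarrow> bidx \<Rightarrow> 'k"
    and D :: "nat \<times> nat \<Rightarrow> (bidx \<Rightarrow> 'k) \<Rightarrow> bidx \<Rightarrow> 'k"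
    and \<phi> :: "(bidx \<Rightarrow> 'k) \<Rightarrow> bidx \<Rightarrow> bidx \<Rightarrow> 'k"
  assumes "simple_graph Vs E"
    and "\<forall>i\<in>Vs. degree E i \<ge> 2"
    and "lie_bialg Vs E \<delta>"
    and "nearly_coboundary Vs E \<delta>"
    and "\<forall>\<alpha>\<in>E. lin_vec (WG Vs E) (D \<alpha>) \<and> (\<forall>v\<in>WG Vs E. D \<alpha> v \<in> WG Vs E)"
    and "lin_vec (WG Vs E) (\<lambda>v (a,b). \<phi> v a b)"
    and "\<forall>v\<in>WG Vs E. \<phi> v \<in> L2Z Vs E"
    and "\<forall>v\<in>WG Vs E. \<delta> v =
           (\<lambda>a b. (\<Sum>\<alpha>\<in>E. wedge (D \<alpha> v) (unitv (Ed \<alpha>)) a b) + \<phi> v a b)"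
  shows "\<forall>\<alpha>\<in>E. \<forall>\<beta>\<in>E. \<forall>v\<in>WG Vs E. D \<alpha> (D \<beta> v) = D \<beta> (D \<alpha> v)"
proof (intro ballI)
  fix \<alpha> \<beta> and v :: "bidx \<Rightarrow> 'k" assume a: "\<alpha> \<in> E" and b: "\<beta> \<in> E" and v: "v \<in> WG Vs E"
  note sg = assms(1)[unfolded simple_graph_def]
  have finVs: "finite Vs" using sg by blast
  have EVs: "E \<subseteq> Vs \<times> Vs" using sg by auto
  have finE: "finite E" using finite_subset[OF EVs] finVs by blast
  have finB: "finite (basis Vs E)" unfolding basis_def using finVs finE by blast
  have lb: "(\<forall>x\<in>nG Vs E. \<forall>p q r.
        (\<Sum>a\<in>basis Vs E. \<Sum>b\<in>basis Vs E. \<delta> x a b * wedge3 (\<delta> (unitv a)) (unitv b) p q r) = (0::'k))"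
    using assms(3) unfolding lie_bialg_def by blast
  have WGn: "\<And>w. w \<in> WG Vs E \<Longrightarrow> w \<in> nG Vs E" unfolding WG_def by blast
  have DW: "\<And>\<gamma> w. \<gamma> \<in> E \<Longrightarrow> w \<in> WG Vs E \<Longrightarrow> D \<gamma> w \<in> WG Vs E" using assms(5) by blast
  have Dlin: "\<And>\<gamma>. \<gamma> \<in> E \<Longrightarrow> lin_vec (WG Vs E) (D \<gamma>)" using assms(5) by blast
  have WGEd: "\<And>w e. w \<in> WG Vs E \<Longrightarrow> w (Ed e) = 0" unfolding WG_def by blast
  have WGVx: "\<And>w i. w \<in> WG Vs E \<Longrightarrow> i \<notin> Vs \<Longrightarrow> w (Vx i) = 0"
    unfolding WG_def nG_def basis_def by blast
  have uW: "\<And>j. j \<in> Vs \<Longrightarrow> unitv (Vx j) \<in> (WG Vs E :: (bidx \<Rightarrow> 'k) set)"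
    unfolding WG_def nG_def basis_def unitv_def by auto
  have uZ: "\<And>\<gamma>. \<gamma> \<in> E \<Longrightarrow> unitv (Ed \<gamma>) \<in> (ZG Vs E :: (bidx \<Rightarrow> 'k) set)"
    unfolding ZG_def nG_def basis_def unitv_def by auto
  have dZ: "\<And>\<gamma>. \<gamma> \<in> E \<Longrightarrow> \<delta> (unitv (Ed \<gamma>)) = (\<lambda>a b. 0)"
  proof -
    fix \<gamma> assume g: "\<gamma> \<in> E"
    have "\<forall>z\<in>ZG Vs E. \<delta> z = (\<lambda>a b. 0)" using assms(4) unfolding nearly_coboundary_def .
    then show "\<delta> (unitv (Ed \<gamma>)) = (\<lambda>a b. 0)" using uZ[OF g] by blast
  qed
  have phiZ: "\<And>w a b. w \<in> WG Vs E \<Longrightarrow> a \<notin> Ed ` E \<or> b \<notin> Ed ` E \<Longrightarrow> \<phi> w a b = 0"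
    using assms(7) unfolding L2Z_def by blast
  have dVE: "\<delta> w (Vx j) (Ed \<gamma>) = D \<gamma> w (Vx j)" if w: "w \<in> WG Vs E" and g: "\<gamma> \<in> E" for w j \<gamma>
  proof -
    have "\<delta> w (Vx j) (Ed \<gamma>) = (\<Sum>\<alpha>\<in>E. wedge (D \<alpha> w) (unitv (Ed \<alpha>)) (Vx j) (Ed \<gamma>)) + \<phi> w (Vx j) (Ed \<gamma>)"
      using assms(8)[rule_format, OF w] by simp
    also have "\<phi> w (Vx j) (Ed \<gamma>) = 0" using phiZ[OF w] by blast
    also have "(\<Sum>\<alpha>\<in>E. wedge (D \<alpha> w) (unitv (Ed \<alpha>)) (Vx j) (Ed \<gamma>)) = (\<Sum>\<alpha>\<in>E. if \<alpha> = \<gamma> then D \<gamma> w (Vx j) else 0)"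
      by (rule sum.cong) (auto simp: wedge_def unitv_def)
    also have "\<dots> = D \<gamma> w (Vx j)" using g finE by simp
    finally show ?thesis by simp
  qed
  have dEV: "\<delta> w (Ed \<gamma>) (Vx j) = - D \<gamma> w (Vx j)" if w: "w \<in> WG Vs E" and g: "\<gamma> \<in> E" for w j \<gamma>
  proof -
    have "\<delta> w (Ed \<gamma>) (Vx j) = (\<Sum>\<alpha>\<in>E. wedge (D \<alpha> w) (unitv (Ed \<alpha>)) (Ed \<gamma>) (Vx j)) + \<phi> w (Ed \<gamma>) (Vx j)"
      using assms(8)[rule_format, OF w] by simp
    also have "\<phi> w (Ed \<gamma>) (Vx j) = 0" using phiZ[OF w] by blast
    also have "(\<Sum>\<alpha>\<in>E. wedge (D \<alpha> w) (unitv (Ed \<alpha>)) (Ed \<gamma>) (Vx j)) = (\<Sum>\<alpha>\<in>E. if \<alpha> = \<gamma> then - D \<gamma> w (Vx j) else 0)"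
      by (rule sum.cong) (auto simp: wedge_def unitv_def WGEd[OF DW[OF _ w]])
    also have "\<dots> = - D \<gamma> w (Vx j)" using g finE by simp
    finally show ?thesis by simp
  qed
  have dVV: "\<delta> w (Vx j) (Vx i) = 0" if w: "w \<in> WG Vs E" for w j i
  proof -
    have "\<delta> w (Vx j) (Vx i) = (\<Sum>\<alpha>\<in>E. wedge (D \<alpha> w) (unitv (Ed \<alpha>)) (Vx j) (Vx i)) + \<phi> w (Vx j) (Vx i)"
      using assms(8)[rule_format, OF w] by simp
    also have "\<phi> w (Vx j) (Vx i) = 0" using phiZ[OF w] by blast
    also have "(\<Sum>\<alpha>\<in>E. wedge (D \<alpha> w) (unitv (Ed \<alpha>)) (Vx j) (Vx i)) = 0"
      by (rule sum.neutral) (auto simp: wedge_def unitv_def)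
    finally show ?thesis by simp
  qed
  \<comment> \<open>co-Jacobi evaluation\<close>
  have key: "(\<Sum>j\<in>Vs. D \<beta> v (Vx j) * D \<alpha> (unitv (Vx j)) (Vx i)) = (\<Sum>j\<in>Vs. D \<alpha> v (Vx j) * D \<beta> (unitv (Vx j)) (Vx i))"
    if i: "i \<in> Vs" for i
  proof -
    have pB: "Vx i \<in> basis Vs E" "Ed \<alpha> \<in> basis Vs E" "Ed \<beta> \<in> basis Vs E"
      using i a b unfolding basis_def by auto
    have "0 = (\<Sum>x\<in>basis Vs E. \<Sum>y\<in>basis Vs E. \<delta> v x y * wedge3 (\<delta> (unitv x)) (unitv y) (Vx i) (Ed \<alpha>) (Ed \<beta>))"
      by (rule lb[rule_format, OF WGn[OF v], symmetric])
    also have "\<dots> = (\<Sum>x\<in>basis Vs E. \<delta> v x (Ed \<beta>) * \<delta> (unitv x) (Vx i) (Ed \<alpha>)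
        + \<delta> v x (Vx i) * \<delta> (unitv x) (Ed \<alpha>) (Ed \<beta>) + \<delta> v x (Ed \<alpha>) * \<delta> (unitv x) (Ed \<beta>) (Vx i))"
      by (rule sum.cong[OF refl], rule wedge3_sum[OF finB pB])
    also have "\<dots> = (\<Sum>x\<in>Vx ` Vs. \<delta> v x (Ed \<beta>) * \<delta> (unitv x) (Vx i) (Ed \<alpha>)
        + \<delta> v x (Vx i) * \<delta> (unitv x) (Ed \<alpha>) (Ed \<beta>) + \<delta> v x (Ed \<alpha>) * \<delta> (unitv x) (Ed \<beta>) (Vx i))
        + (\<Sum>x\<in>Ed ` E. \<delta> v x (Ed \<beta>) * \<delta> (unitv x) (Vx i) (Ed \<alpha>)
        + \<delta> v x (Vx i) * \<delta> (unitv x) (Ed \<alpha>) (Ed \<beta>) + \<delta> v x (Ed \<alpha>) * \<delta> (unitv x) (Ed \<beta>) (Vx i))"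
      unfolding basis_def by (rule sum.union_disjoint) (use finVs finE in auto)
    also have "(\<Sum>x\<in>Ed ` E. \<delta> v x (Ed \<beta>) * \<delta> (unitv x) (Vx i) (Ed \<alpha>)
        + \<delta> v x (Vx i) * \<delta> (unitv x) (Ed \<alpha>) (Ed \<beta>) + \<delta> v x (Ed \<alpha>) * \<delta> (unitv x) (Ed \<beta>) (Vx i)) = 0"
      by (rule sum.neutral) (auto simp: dZ)
    also have "(\<Sum>x\<in>Vx ` Vs. \<delta> v x (Ed \<beta>) * \<delta> (unitv x) (Vx i) (Ed \<alpha>)
        + \<delta> v x (Vx i) * \<delta> (unitv x) (Ed \<alpha>) (Ed \<beta>) + \<delta> v x (Ed \<alpha>) * \<delta> (unitv x) (Ed \<beta>) (Vx i))
       = (\<Sum>j\<in>Vs. \<delta> v (Vx j) (Ed \<beta>) * \<delta> (unitv (Vx j)) (Vx i) (Ed \<alpha>)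
        + \<delta> v (Vx j) (Vx i) * \<delta> (unitv (Vx j)) (Ed \<alpha>) (Ed \<beta>) + \<delta> v (Vx j) (Ed \<alpha>) * \<delta> (unitv (Vx j)) (Ed \<beta>) (Vx i))"
      by (rule sum.reindex_cong[of Vx]) (auto simp: inj_on_def)
    also have "\<dots> = (\<Sum>j\<in>Vs. D \<beta> v (Vx j) * D \<alpha> (unitv (Vx j)) (Vx i) - D \<alpha> v (Vx j) * D \<beta> (unitv (Vx j)) (Vx i))"
      by (rule sum.cong[OF refl]) (simp add: dVE[OF v] dVV[OF v] dVE[OF uW] dEV[OF uW] a b)
    also have "\<dots> = (\<Sum>j\<in>Vs. D \<beta> v (Vx j) * D \<alpha> (unitv (Vx j)) (Vx i)) - (\<Sum>j\<in>Vs. D \<alpha> v (Vx j) * D \<beta> (unitv (Vx j)) (Vx i))"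
      by (simp add: sum_subtractf)
    finally show ?thesis by simp
  qed
  have z0: "(\<lambda>b. 0) \<in> (WG Vs E :: (bidx \<Rightarrow> 'k) set)" unfolding WG_def nG_def by auto
  have addW: "\<And>x y. x \<in> WG Vs E \<Longrightarrow> y \<in> WG Vs E \<Longrightarrow> (\<lambda>b. x b + y b) \<in> (WG Vs E :: (bidx \<Rightarrow> 'k) set)"
    unfolding WG_def nG_def by auto
  have smW: "\<And>x c. x \<in> WG Vs E \<Longrightarrow> (\<lambda>b. c * x b) \<in> (WG Vs E :: (bidx \<Rightarrow> 'k) set)"
    unfolding WG_def nG_def by auto
  have decomp: "w = (\<lambda>b. \<Sum>j\<in>Vs. w (Vx j) * unitv (Vx j) b)" if w: "w \<in> WG Vs E" for w :: "bidx \<Rightarrow> 'k"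
  proof
    fix b show "w b = (\<Sum>j\<in>Vs. w (Vx j) * unitv (Vx j) b)"
    proof (cases b)
      case (Vx i)
      have "(\<Sum>j\<in>Vs. w (Vx j) * unitv (Vx j) b) = (\<Sum>j\<in>Vs. if i = j then w (Vx j) else 0)"
        by (rule sum.cong) (auto simp: unitv_def Vx)
      also have "\<dots> = w (Vx i)" using finVs WGVx[OF w, of i] by simp
      finally show ?thesis using Vx by simp
    next
      case (Ed e)
      then show ?thesis using WGEd[OF w] by (simp add: unitv_def)
    qed
  qed
  have app: "D \<gamma> (D \<eta> v) = (\<lambda>t. \<Sum>j\<in>Vs. D \<eta> v (Vx j) * D \<gamma> (unitv (Vx j)) t)" if g: "\<gamma> \<in> E" and h: "\<eta> \<in> E" for \<gamma> \<eta>
  proof -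
    have "D \<gamma> (D \<eta> v) = D \<gamma> (\<lambda>b. \<Sum>j\<in>Vs. D \<eta> v (Vx j) * unitv (Vx j) b)"
      using decomp[OF DW[OF h v]] by simp
    also have "\<dots> = (\<lambda>t. \<Sum>j\<in>Vs. D \<eta> v (Vx j) * D \<gamma> (unitv (Vx j)) t)"
    proof -
      have "\<forall>j\<in>Vs. unitv (Vx j) \<in> (WG Vs E :: (bidx \<Rightarrow> 'k) set)" using uW by blast
      from conjunct1[OF lin_sum[OF Dlin[OF g] z0 addW smW finVs this, of "\<lambda>j. D \<eta> v (Vx j)"]]
      show ?thesis .
    qed
    finally show ?thesis .
  qed
  have inW: "D \<alpha> (D \<beta> v) \<in> WG Vs E" "D \<beta> (D \<alpha> v) \<in> WG Vs E" using DW[OF a DW[OF b v]] DW[OF b DW[OF a v]] by auto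
  show "D \<alpha> (D \<beta> v) = D \<beta> (D \<alpha> v)"
  proof
    fix x show "D \<alpha> (D \<beta> v) x = D \<beta> (D \<alpha> v) x"
    proof (cases x)
      case (Vx i)
      show ?thesis
      proof (cases "i \<in> Vs")
        case True
        then show ?thesis using key[OF True] app[OF a b] app[OF b a] Vx by simp
      next
        case False
        then show ?thesis using WGVx[OF inW(1)] WGVx[OF inW(2)] Vx by simp
      qed
    next
      case (Ed e)
      then show ?thesis using WGEd[OF inW(1)] WGEd[OF inW(2)] by simp
    qed
  qed
qed

end
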